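(* Let $G=(V,E)$ be a finite, simple, connected graph with $|V|\geq 3$, and let $d\in \mathrm{Der}(\mathcal{A}(G))$. If $\Gamma_3(G)=\emptyset$, i.e. $G$ has no twin class with at least three vertices, then $d=0$.
   Context: Throughout, $\mathbb{K}$ is a field of characteristic $0$. A graph $G=(V,E)$ has vertex set $V=\{1,\dots,n\}$ and is assumed finite, simple (no loops, no multiple edges) and connected. $\mathcal{N}(i)$ denotes the set of neighbors of vertex $i$, $\deg(i)=|\mathcal{N}(i)|$, and $(a_{ij})$ is the adjacency matrix ($a_{ij}=1$ if $i,j$ are adjacent, $0$ otherwise). The evolution algebra $\mathcal{A}(G)$ is the $\mathbb{K}$-algebra with basis $\{e_i: i\in V\}$ and product $e_i\cdot e_i=\sum_{k\in V}a_{ik}e_k=\sum_{k\in\mathcal{N}(i)}e_k$ and $e_i\cdot e_j=0$ for $i\neq j$. A derivation of $\mathcal{A}(G)$ is a linear map $d:\mathcal{A}(G)\to\mathcal{A}(G)$ with $d(u\cdot v)=d(u)\cdot v+u\cdot d(v)$ for all $u,v$; $\mathrm{Der}(\mathcal{A}(G))$ is the space of derivations. Two vertices $i,j$ are twins, written $i\sim_t j$, if $\mathcal{N}(i)=\mathcal{N}(j)$; this is an equivalence relation whose classes are called twin classes. $\Gamma_3(G)$ denotes the set of twin classes of $G$ having at least three vertices. *)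

theory Defs
  imports Main
begin

text \<open>Elements of the evolution algebra A(G) are coordinate vectors u :: 'v \<Rightarrow> 'k
  w.r.t. the natural basis {e_i}; e_i has coordinates (\<lambda>k. if k = i then 1 else 0).\<close>

definition simple_graph :: "('v \<Rightarrow> 'v \<Rightarrow> bool) \<Rightarrow> bool" where
  "simple_graph E \<longleftrightarrow> (\<forall>i j. E i j \<longrightarrow> E j i) \<and> (\<forall>i. \<not> E i i)"

definition connected_graph :: "('v \<Rightarrow> 'v \<Rightarrow> bool) \<Rightarrow> bool" where
  "connected_graph E \<longleftrightarrow> (\<forall>i j. E\<^sup>*\<^sup>* i j)"

definition nbrs :: "('v \<Rightarrow> 'v \<Rightarrow> bool) \<Rightarrow> 'v \<Rightarrow> 'v set" where
  "nbrs E i = {k. E i k}"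

definition twins :: "('v \<Rightarrow> 'v \<Rightarrow> bool) \<Rightarrow> 'v \<Rightarrow> 'v \<Rightarrow> bool" where
  "twins E i j \<longleftrightarrow> nbrs E i = nbrs E j"

definition twin_classes :: "('v \<Rightarrow> 'v \<Rightarrow> bool) \<Rightarrow> 'v set set" where
  "twin_classes E = {C. \<exists>i. C = {j. twins E i j}}"

definition Gamma3 :: "('v::finite \<Rightarrow> 'v \<Rightarrow> bool) \<Rightarrow> 'v set set" where
  "Gamma3 E = {C \<in> twin_classes E. card C \<ge> 3}"

text \<open>Product of A(G): e_i e_i = sum_{k} a_ik e_k, e_i e_j = 0 (i \<noteq> j), extended bilinearly.\<close>
definition evo_mult :: "('v::finite \<Rightarrow> 'v \<Rightarrow> bool) \<Rightarrow> ('v \<Rightarrow> 'k::field) \<Rightarrow> ('v \<Rightarrow> 'k) \<Rightarrow> ('v \<Rightarrow> 'k)" where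
  "evo_mult E u v = (\<lambda>k. \<Sum>i\<in>UNIV. u i * v i * (if E i k then 1 else 0))"

definition is_linear_map :: "(('v \<Rightarrow> 'k::field) \<Rightarrow> ('v \<Rightarrow> 'k)) \<Rightarrow> bool" where
  "is_linear_map d \<longleftrightarrow>
     (\<forall>u v. d (\<lambda>x. u x + v x) = (\<lambda>x. d u x + d v x)) \<and>
     (\<forall>c u. d (\<lambda>x. c * u x) = (\<lambda>x. c * d u x))"

definition is_derivation :: "('v::finite \<Rightarrow> 'v \<Rightarrow> bool) \<Rightarrow> (('v \<Rightarrow> 'k::field) \<Rightarrow> ('v \<Rightarrow> 'k)) \<Rightarrow> bool" where
  "is_derivation E d \<longleftrightarrow> is_linear_map d \<and>
     (\<forall>u v. d (evo_mult E u v) = (\<lambda>k. evo_mult E (d u) v k + evo_mult E u (d v) k))"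

end

theory Submission
imports Defs
begin

definition ev :: "'v \<Rightarrow> 'v \<Rightarrow> 'k::field" where "ev i = (\<lambda>k. if k = i then 1 else 0)"

lemma mult_e_right: "evo_mult E u (ev j) = (\<lambda>k. u j * (if E j k then 1 else 0))"
proof
  fix k
  have "(\<Sum>i\<in>UNIV. u i * ev j i * (if E i k then 1 else 0)) = (\<Sum>i\<in>UNIV. if i = j then u j * (if E j k then 1 else 0) else 0)"
    by (rule sum.cong) (auto simp: ev_def)
  then show "evo_mult E u (ev j) k = u j * (if E j k then 1 else 0)"
    unfolding evo_mult_def by simp
qed

lemma mult_e_left: "evo_mult E (ev j) u = (\<lambda>k. u j * (if E j k then 1 else 0))"
proof
  fix k
  have "(\<Sum>i\<in>UNIV. ev j i * u i * (if E i k then 1 else 0)) = (\<Sum>i\<in>UNIV. if i = j then u j * (if E j k then 1 else 0) else 0)"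
    by (rule sum.cong) (auto simp: ev_def)
  then show "evo_mult E (ev j) u k = u j * (if E j k then 1 else 0)"
    unfolding evo_mult_def by simp
qed

lemma lin_add: "is_linear_map d \<Longrightarrow> d (\<lambda>x. u x + v x) = (\<lambda>x. d u x + d v x)"
  unfolding is_linear_map_def by blast

lemma lin_smult: "is_linear_map d \<Longrightarrow> d (\<lambda>x. c * u x) = (\<lambda>x. c * d u x)"
  unfolding is_linear_map_def by blast

lemma lin_zero: "is_linear_map d \<Longrightarrow> d (\<lambda>x. 0) = (\<lambda>x. 0)"
  using lin_smult[of d 0] by simp

lemma lin_sum: assumes "is_linear_map d" "finite A"
  shows "d (\<lambda>x. \<Sum>k\<in>A. f k x) = (\<lambda>x. \<Sum>k\<in>A. d (f k) x)"
  using assms(2)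
proof (induction A rule: finite_induct)
  case empty then show ?case using lin_zero[OF assms(1)] by simp
next
  case (insert a A)
  have "d (\<lambda>x. \<Sum>k\<in>insert a A. f k x) = d (\<lambda>x. f a x + (\<Sum>k\<in>A. f k x))"
    using insert by simp
  also have "\<dots> = (\<lambda>x. d (f a) x + d (\<lambda>x. \<Sum>k\<in>A. f k x) x)"
    by (rule lin_add[OF assms(1)])
  finally show ?case using insert by simp
qed

lemma eqA: assumes "is_derivation E d" "i \<noteq> j"
  shows "d (ev i) j * (if E j k then 1 else 0) + d (ev j) i * (if E i k then 1 else 0) = (0::'k::field)"
proof -
  have lin: "is_linear_map d" using assms(1) unfolding is_derivation_def by blast
  have "evo_mult E (ev i) (ev j) = (\<lambda>k. 0::'k)"
    using assms(2) by (simp only: mult_e_right) (simp add: ev_def)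
  then have "d (\<lambda>k. 0) = (\<lambda>k. evo_mult E (d (ev i)) (ev j) k + evo_mult E (ev i) (d (ev j)) k)"
    using assms(1) unfolding is_derivation_def by metis
  then have "(\<lambda>k. 0::'k) = (\<lambda>k. d (ev i) j * (if E j k then 1 else 0) + d (ev j) i * (if E i k then 1 else 0))"
    by (simp add: lin_zero[OF lin] mult_e_right mult_e_left)
  then show ?thesis by (metis)
qed

lemma eqB: assumes "is_derivation E d"
  shows "(\<Sum>k\<in>nbrs E i. d (ev k) j) = 2 * d (ev i) i * (if E i j then 1 else (0::'k::field))"
proof -
  have lin: "is_linear_map d" using assms(1) unfolding is_derivation_def by blast
  have fin: "finite (nbrs E i)" by simp
  have "evo_mult E (ev i) (ev i) = (\<lambda>k. if E i k then 1 else (0::'k))"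
    by (simp only: mult_e_right) (simp add: ev_def)
  also have "\<dots> = (\<lambda>x. \<Sum>k\<in>nbrs E i. ev k x)"
    by (auto simp: ev_def nbrs_def)
  finally have "d (\<lambda>x. \<Sum>k\<in>nbrs E i. ev k x) = (\<lambda>k. evo_mult E (d (ev i)) (ev i) k + evo_mult E (ev i) (d (ev i)) k)"
    using assms(1) unfolding is_derivation_def by metis
  then have "(\<lambda>x. \<Sum>k\<in>nbrs E i. d (ev k) x) = (\<lambda>k. 2 * d (ev i) i * (if E i k then 1 else 0))"
    by (simp add: lin_sum[OF lin fin] mult_e_right mult_e_left mult.assoc)
  then show ?thesis by metis
qed

theorem theorem2p1:
  fixes E :: "'v::finite \<Rightarrow> 'v \<Rightarrow> bool"
    and d :: "('v \<Rightarrow> 'k::field_char_0) \<Rightarrow> ('v \<Rightarrow> 'k)"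
  assumes "simple_graph E"
    and "connected_graph E"
    and "card (UNIV :: 'v set) \<ge> 3"
    and "is_derivation E d"
    and "Gamma3 E = {}"
  shows "d = (\<lambda>u. \<lambda>k. 0)"
proof -
  have lin: "is_linear_map d" using assms(4) unfolding is_derivation_def by blast
  define M where "M x y = d (ev y) x" for x y
  have sym: "E j i" if "E i j" for i j using assms(1) that unfolding simple_graph_def by blast
  have nb: "\<exists>k. E i k" for i
  proof -
    have "UNIV \<noteq> {i}"
    proof
      assume h: "UNIV = {i}"
      have "card (UNIV::'v set) = card {i}" by (simp only: h)
      then have "card (UNIV::'v set) = 1" by simp
      with assms(3) show False by simp
    qed
    then obtain j where "j \<noteq> i" by blast
    moreover have "E\<^sup>*\<^sup>* i j" using assms(2) unfolding connected_graph_def by blast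
    ultimately show ?thesis by (metis converse_rtranclpE)
  qed
  have A: "M j i * (if E j k then 1 else 0) + M i j * (if E i k then 1 else 0) = 0" if "i \<noteq> j" for i j k
    using eqA[OF assms(4) that] unfolding M_def by simp
  have twsym: "twins E j i" if "twins E i j" for i j using that unfolding twins_def by simp
  have nontwin: "M j i = 0" if "i \<noteq> j" "\<not> twins E i j" for i j
  proof -
    have "nbrs E i \<noteq> nbrs E j" using that unfolding twins_def by simp
    then obtain k where k: "E i k \<noteq> E j k" unfolding nbrs_def by blast
    show ?thesis
    proof (cases "E i k")
      case True
      then have "M i j = 0" using A[OF that(1), of k] k by simp
      moreover obtain k' where "E j k'" using nb by blast
      ultimately show ?thesis using A[OF that(1), of k'] by simp
    next
      case False
      then show ?thesis using A[OF that(1), of k] k by simp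
    qed
  qed
  have twin_anti: "M j i = - M i j" if "i \<noteq> j" "twins E i j" for i j
  proof -
    obtain k where "E i k" using nb by blast
    moreover then have "E j k" using that(2) unfolding twins_def nbrs_def by blast
    ultimately show ?thesis using A[OF that(1), of k] by (simp add: eq_neg_iff_add_eq_0)
  qed
  have twin_unique: "s = t" if "twins E j t" "twins E j s" "t \<noteq> j" "s \<noteq> j" for j s t
  proof (rule ccontr)
    assume st: "s \<noteq> t"
    let ?C = "{x. twins E j x}"
    have "?C \<in> twin_classes E" unfolding twin_classes_def by blast
    then have "card ?C < 3" using assms(5) unfolding Gamma3_def by force
    moreover have "{j, t, s} \<subseteq> ?C" using that unfolding twins_def by auto
    then have "card {j, t, s} \<le> card ?C" by (simp add: card_mono)
    moreover have "card {j, t, s} = 3" using st that by auto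
    ultimately show False by simp
  qed
  define S where "S j = (\<Sum>k\<in>UNIV - {j}. M j k)" for j
  have B: "M j j + S j = 2 * M i i" if "E i j" for i j
  proof -
    have eB: "(\<Sum>k\<in>nbrs E i. M j k) = 2 * M i i"
      using eqB[OF assms(4), where i=i and j=j] that unfolding M_def by simp
    have ins: "nbrs E i = insert j (nbrs E i - {j})" using that unfolding nbrs_def by auto
    have "(\<Sum>k\<in>nbrs E i - {j}. M j k) = (\<Sum>k\<in>UNIV - {j}. M j k)"
    proof (rule sum.mono_neutral_left)
      show "\<forall>k\<in>UNIV - {j} - (nbrs E i - {j}). M j k = 0"
      proof
        fix k assume "k \<in> UNIV - {j} - (nbrs E i - {j})"
        then have kj: "k \<noteq> j" and nE: "\<not> E i k" unfolding nbrs_def by auto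
        have "\<not> twins E k j"
        proof
          assume "twins E k j"
          then have "nbrs E k = nbrs E j" unfolding twins_def .
          moreover have "E j i" using sym[OF that] .
          ultimately have "E k i" unfolding nbrs_def by blast
          then show False using sym nE by blast
        qed
        then show "M j k = 0" using nontwin[OF kj] by blast
      qed
    qed auto
    then have "(\<Sum>k\<in>nbrs E i. M j k) = M j j + S j"
      unfolding S_def by (subst ins) (simp add: sum.insert_remove)
    then show ?thesis using eB by simp
  qed
  have S_val: "S j = M j t" if "t \<noteq> j" "twins E j t" for j t
  proof -
    have "UNIV - {j} = insert t (UNIV - {j, t})" using that by auto
    then have "S j = M j t + (\<Sum>k\<in>UNIV - {j, t}. M j k)" unfolding S_def by simp
    moreover have "(\<Sum>k\<in>UNIV - {j, t}. M j k) = 0"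
    proof (rule sum.neutral, rule ballI)
      fix k assume "k \<in> UNIV - {j, t}"
      then have "k \<noteq> j" "k \<noteq> t" by auto
      have "\<not> twins E j k"
      proof
        assume "twins E j k"
        then have "k = t" using twin_unique[where j=j and s=k and t=t] that \<open>k \<noteq> j\<close> by blast
        then show False using \<open>k \<noteq> t\<close> by simp
      qed
      then have "\<not> twins E k j" using twsym by blast
      then show "M j k = 0" using nontwin \<open>k \<noteq> j\<close> by blast
    qed
    ultimately show ?thesis by simp
  qed
  have S_zero: "S j = 0" for j
  proof (cases "\<exists>t. t \<noteq> j \<and> twins E j t")
    case True
    then obtain t where t: "t \<noteq> j" "twins E j t" by blast
    obtain i where ji: "E j i" using nb by blast
    have ti: "E t i" using ji t(2) unfolding twins_def nbrs_def by blast
    have "M i i + S i = 2 * M j j" using B[OF ji] .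
    moreover have "M i i + S i = 2 * M t t" using B[OF ti] .
    ultimately have jt: "M j j = M t t" by simp
    have "M j j + S j = M t t + S t" using B[OF sym[OF ji]] B[OF sym[OF ti]] by simp
    then have e1: "S j = S t" using jt by simp
    have e2: "S t = M t j" using S_val[where j=t and t=j] t twsym by auto
    have e3: "M t j = - M j t" using twin_anti[where i=j and j=t] t by auto
    have e4: "S j = M j t" using S_val t by blast
    have h: "S j = - S j" using e1 e2 e3 e4 by metis
    have "S j + S j = S j + - S j" by (rule arg_cong[where f="\<lambda>x. S j + x", OF h])
    then have "S j + S j = 0" by simp
    then have "2 * S j = 0" by (simp only: mult_2)
    then show ?thesis by simp
  next
    case False
    then have "\<forall>k\<in>UNIV - {j}. M j k = 0" using nontwin twsym by blast
    then show ?thesis unfolding S_def by simp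
  qed
  have diag: "M i i = 0" for i
  proof -
    obtain j where ij: "E i j" using nb by blast
    have "M j j = 2 * M i i" using B[OF ij] S_zero by simp
    moreover have "M i i = 2 * M j j" using B[OF sym[OF ij]] S_zero by simp
    ultimately have "3 * M i i = 0" by simp
    then show ?thesis by simp
  qed
  have M0: "M x y = 0" for x y
  proof (cases "x = y")
    case True then show ?thesis using diag by simp
  next
    case False
    show ?thesis
    proof (cases "twins E y x")
      case True
      have "S x = M x y" using S_val[where j=x and t=y] True twsym \<open>x \<noteq> y\<close> by auto
      then show ?thesis using S_zero by simp
    next
      case False
      then show ?thesis using nontwin[where i=y and j=x] \<open>x \<noteq> y\<close> by auto
    qed
  qed
  show ?thesis
  proof (rule ext)
    fix u :: "'v \<Rightarrow> 'k"
    have "u = (\<lambda>x. \<Sum>i\<in>UNIV. u i * ev i x)"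
    proof
      fix x
      have "(\<Sum>i\<in>UNIV. u i * ev i x) = (\<Sum>i\<in>UNIV. if x = i then u i else 0)"
        by (rule sum.cong) (auto simp: ev_def)
      then show "u x = (\<Sum>i\<in>UNIV. u i * ev i x)" by simp
    qed
    then have "d u = d (\<lambda>x. \<Sum>i\<in>UNIV. (\<lambda>x. u i * ev i x) x)" by simp
    also have "\<dots> = (\<lambda>x. \<Sum>i\<in>UNIV. d (\<lambda>x. u i * ev i x) x)" by (rule lin_sum[OF lin]) simp
    also have "\<dots> = (\<lambda>x. \<Sum>i\<in>UNIV. u i * M x i)" by (simp add: lin_smult[OF lin] M_def)
    also have "\<dots> = (\<lambda>x. 0)" by (simp add: M0)
    finally show "d u = (\<lambda>k. 0)" .
  qed
qed

end
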